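(* Let $n\geqslant2$, $\lambda>0$, distinct points $p_1,\ldots,p_M\in\mathbb{Z}^n$ and positive integers $n_1,\ldots,n_M$ be given, and let $g=4\pi\sum_{j=1}^Mn_j\delta_{p_j}$. Let $\Omega_0\subset\mathbb{Z}^n$ be a finite set containing $\{p_j\}_{j=1}^M$ and let $\Omega$ be a finite connected subset with $\Omega_0\subset\Omega$. Fix $K>2\lambda$, let $u_0=0$ and for $k\geqslant1$ let $u_k:\overline\Omega\to\mathbb{R}$ be the (unique) solution of $$(\Delta-K)u_k=\lambda e^{u_{k-1}}(e^{u_{k-1}}-1)+g-Ku_{k-1}\ \text{ on }\Omega,\qquad u_k=0\ \text{ on }\delta\Omega,$$ and let $u_\Omega=\lim_{k\to\infty}u_k$ (pointwise limit, which exists and is finite). Then for any function $V:\overline\Omega\to\mathbb{R}$ satisfying $$\Delta V\geqslant\lambda e^V(e^V-1)+g\ \text{ on }\Omega,\qquad V\leqslant0\ \text{ on }\delta\Omega,$$ we have $0=u_0\geqslant u_1\geqslant\cdots\geqslant u_k\geqslant\cdots\geqslant u_\Omega\geqslant V$ on $\overline\Omega$.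
   Context: $\mathbb{Z}^n$ is the integer lattice graph with $x\sim y$ iff $\sum_i|x_i-y_i|=1$. For a finite $\Omega\subset\mathbb{Z}^n$, $\delta\Omega=\{y\in\mathbb{Z}^n\setminus\Omega:\exists x\in\Omega,\ y\sim x\}$ and $\overline\Omega=\Omega\cup\delta\Omega$. For $u:\overline\Omega\to\mathbb{R}$ and $x\in\Omega$, $\Delta u(x)=\sum_{y\sim x}(u(y)-u(x))$. $\delta_p$ is the function equal to $1$ at $p$ and $0$ elsewhere. *)

theory Defs
  imports "HOL-Analysis.Analysis"
begin

definition lat_adj :: "int ^ 'n \<Rightarrow> int ^ 'n \<Rightarrow> bool" where
  "lat_adj x y \<longleftrightarrow> (\<Sum>i\<in>UNIV. \<bar>x $ i - y $ i\<bar>) = 1"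

definition lat_bdry :: "(int ^ 'n) set \<Rightarrow> (int ^ 'n) set" where
  "lat_bdry \<Omega> = {y. y \<notin> \<Omega> \<and> (\<exists>x\<in>\<Omega>. lat_adj y x)}"

definition lat_closure :: "(int ^ 'n) set \<Rightarrow> (int ^ 'n) set" where
  "lat_closure \<Omega> = \<Omega> \<union> lat_bdry \<Omega>"

definition lat_lap :: "(int ^ 'n \<Rightarrow> real) \<Rightarrow> int ^ 'n \<Rightarrow> real" where
  "lat_lap u x = (\<Sum>y\<in>{y. lat_adj x y}. u y - u x)"

definition lat_connected :: "(int ^ 'n) set \<Rightarrow> bool" where
  "lat_connected \<Omega> \<longleftrightarrow>
     (\<forall>x\<in>\<Omega>. \<forall>y\<in>\<Omega>. (x, y) \<in> {(a, b). a \<in> \<Omega> \<and> b \<in> \<Omega> \<and> lat_adj a b}\<^sup>*)"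

end

theory Submission
  imports Defs
begin


lemma lat_adj_sym: "lat_adj x y = lat_adj y x"
  unfolding lat_adj_def by (simp add: abs_minus_commute)

lemma maxp:
  fixes w :: "int ^ 'n \<Rightarrow> real"
  assumes fin: "finite \<Omega>"
    and bd: "\<forall>x\<in>lat_bdry \<Omega>. w x \<le> 0"
    and pos: "\<forall>x\<in>\<Omega>. w x > 0 \<longrightarrow> lat_lap w x > 0"
  shows "\<forall>x\<in>\<Omega>. w x \<le> 0"
proof (rule ccontr)
  assume "\<not> ?thesis"
  then obtain z where z: "z \<in> \<Omega>" "w z > 0" by force
  have ne: "\<Omega> \<noteq> {}" using z by auto
  obtain x where x: "x \<in> \<Omega>" "w x = Max (w ` \<Omega>)"
  proof -
    have "Max (w ` \<Omega>) \<in> w ` \<Omega>" using Max_in[of "w ` \<Omega>"] fin ne by simp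
    then show ?thesis using that by force
  qed
  have mx: "\<And>y. y \<in> \<Omega> \<Longrightarrow> w y \<le> w x" using x fin by simp
  have wx: "w x > 0" using mx[OF z(1)] z(2) by simp
  have "lat_lap w x \<le> 0"
    unfolding lat_lap_def
  proof (rule sum_nonpos)
    fix y assume "y \<in> {y. lat_adj x y}"
    hence a: "lat_adj y x" using lat_adj_sym by auto
    show "w y - w x \<le> 0"
    proof (cases "y \<in> \<Omega>")
      case True then show ?thesis using mx by simp
    next
      case False
      hence "y \<in> lat_bdry \<Omega>" using a x unfolding lat_bdry_def by auto
      then show ?thesis using bd wx by force
    qed
  qed
  moreover have "lat_lap w x > 0" using pos x wx by auto
  ultimately show False by simp
qed

lemma lap_diff: "lat_lap (\<lambda>x. a x - b x) x = lat_lap a x - lat_lap b x"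
  unfolding lat_lap_def by (simp add: sum_subtractf[symmetric] algebra_simps)

lemma comp:
  fixes a b :: "int ^ 'n \<Rightarrow> real"
  assumes fin: "finite \<Omega>"
    and bd: "\<forall>x\<in>lat_bdry \<Omega>. a x \<le> b x"
    and pos: "\<forall>x\<in>\<Omega>. a x > b x \<longrightarrow> lat_lap a x > lat_lap b x"
  shows "\<forall>x\<in>\<Omega>. a x \<le> b x"
  using maxp[OF fin, of "\<lambda>x. a x - b x"] bd pos by (simp add: lap_diff)

lemma Fmono:
  fixes lam K s t :: real
  assumes "lam > 0" "K > 2 * lam" "s \<le> t" "t \<le> 0"
  shows "lam * exp t * (exp t - 1) - K * t \<le> lam * exp s * (exp s - 1) - K * s"
proof -
  have e1: "1 + 2 * (s - t) \<le> exp (2 * (s - t))" using exp_ge_add_one_self by blast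
  have e2: "exp (2 * (s - t)) * exp (2 * t) = exp (2 * s)" by (simp add: exp_add[symmetric] algebra_simps)
  have e3: "exp (2 * t) \<le> 1" using assms by simp
  have e4: "exp (2 * t) > 0" by simp
  have "(1 + 2 * (s - t)) * exp (2 * t) \<le> exp (2 * s)"
    using mult_right_mono[OF e1, of "exp (2 * t)"] e2 e4 by (simp only: less_imp_le)
  hence A: "exp (2 * t) - exp (2 * s) \<le> 2 * (t - s) * exp (2 * t)" by (simp add: algebra_simps)
  have B: "2 * (t - s) * exp (2 * t) \<le> 2 * (t - s)" using e3 assms by (simp add: mult_left_le)
  have C: "exp s \<le> exp t" using assms by simp
  have sq: "exp t * exp t = exp (2 * t)" "exp s * exp s = exp (2 * s)"
    by (simp_all add: exp_add[symmetric])
  have "lam * (exp (2 * t) - exp (2 * s)) \<le> lam * (2 * (t - s))"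
    using A B assms by (intro mult_left_mono) auto
  also have "\<dots> \<le> K * (t - s)" using mult_right_mono[of "2*lam" K "t - s"] assms by (simp add: algebra_simps)
  finally have "lam * (exp (2 * t) - exp (2 * s)) \<le> K * (t - s)" .
  moreover have "lam * (exp t - exp s) \<ge> 0" using assms C by simp
  ultimately show ?thesis using sq by (simp add: algebra_simps)
qed

lemma step:
  fixes a al g b be :: "int ^ 'n \<Rightarrow> real"
  assumes fin: "finite \<Omega>" and lp: "lam > 0" and Kb: "K > 2 * lam"
    and ea: "\<forall>x\<in>\<Omega>. lat_lap a x - K * a x \<ge> lam * exp (al x) * (exp (al x) - 1) + g x - K * al x"
    and eb: "\<forall>x\<in>\<Omega>. lat_lap b x - K * b x = lam * exp (be x) * (exp (be x) - 1) + g x - K * be x"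
    and ab: "\<forall>x\<in>\<Omega>. al x \<le> be x \<and> be x \<le> 0"
    and bd: "\<forall>x\<in>lat_bdry \<Omega>. a x \<le> b x"
  shows "\<forall>x\<in>\<Omega>. a x \<le> b x"
proof (rule comp[OF fin bd], intro ballI impI)
  fix x assume x: "x \<in> \<Omega>" and gt: "a x > b x"
  have "lam * exp (be x) * (exp (be x) - 1) - K * be x \<le> lam * exp (al x) * (exp (al x) - 1) - K * al x"
    using Fmono[OF lp Kb] ab x by blast
  moreover have "K * b x < K * a x" using gt Kb lp by simp
  ultimately show "lat_lap a x > lat_lap b x" using ea eb x by fastforce
qed

theorem lemma3p3:
  fixes lam K :: real
    and M :: nat
    and p :: "nat \<Rightarrow> int ^ 'n"
    and m :: "nat \<Rightarrow> nat"
    and g :: "int ^ 'n \<Rightarrow> real"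
    and \<Omega>0 \<Omega> :: "(int ^ 'n) set"
    and u :: "nat \<Rightarrow> int ^ 'n \<Rightarrow> real"
    and V :: "int ^ 'n \<Rightarrow> real"
  assumes n2: "CARD('n) \<ge> 2"
    and lam_pos: "lam > 0"
    and p_distinct: "inj_on p {1..M}"
    and m_pos: "\<forall>j\<in>{1..M}. m j > 0"
    and g_def: "g = (\<lambda>x. 4 * pi * (\<Sum>j\<in>{1..M}. real (m j) * (if x = p j then 1 else 0)))"
    and Omega0_fin: "finite \<Omega>0"
    and Omega0_pts: "p ` {1..M} \<subseteq> \<Omega>0"
    and Omega_fin: "finite \<Omega>"
    and Omega_conn: "lat_connected \<Omega>"
    and Omega0_sub: "\<Omega>0 \<subseteq> \<Omega>"
    and K_big: "K > 2 * lam"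
    and u0: "\<forall>x\<in>lat_closure \<Omega>. u 0 x = 0"
    and u_eq: "\<forall>k. \<forall>x\<in>\<Omega>. lat_lap (u (Suc k)) x - K * u (Suc k) x
                 = lam * exp (u k x) * (exp (u k x) - 1) + g x - K * u k x"
    and u_bdry: "\<forall>k. \<forall>x\<in>lat_bdry \<Omega>. u (Suc k) x = 0"
    and V_sub: "\<forall>x\<in>\<Omega>. lat_lap V x \<ge> lam * exp (V x) * (exp (V x) - 1) + g x"
    and V_bdry: "\<forall>x\<in>lat_bdry \<Omega>. V x \<le> 0"
  shows "\<forall>x\<in>lat_closure \<Omega>.
           u 0 x = 0
         \<and> (\<forall>k. u (Suc k) x \<le> u k x)
         \<and> convergent (\<lambda>k. u k x)
         \<and> (\<forall>k. lim (\<lambda>k. u k x) \<le> u k x)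
         \<and> V x \<le> lim (\<lambda>k. u k x)"
proof -
  have Kp: "K > 0" using K_big lam_pos by simp
  have gnn: "\<And>x. g x \<ge> 0" unfolding g_def by (auto intro!: sum_nonneg mult_nonneg_nonneg)
  have cl: "\<And>x. x \<in> lat_closure \<Omega> \<Longrightarrow> x \<in> \<Omega> \<or> x \<in> lat_bdry \<Omega>"
    unfolding lat_closure_def by auto
  have lap0: "\<And>x. lat_lap (\<lambda>_. 0) x = 0" unfolding lat_lap_def by simp
  have V0: "\<forall>x\<in>\<Omega>. V x \<le> 0"
  proof (rule comp[OF Omega_fin, of V "\<lambda>_. 0", simplified lap0])
    show "\<forall>x\<in>lat_bdry \<Omega>. V x \<le> 0" using V_bdry .
    show "\<forall>x\<in>\<Omega>. 0 < V x \<longrightarrow> 0 < lat_lap V x"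
    proof (intro ballI impI)
      fix x assume x: "x \<in> \<Omega>" "0 < V x"
      have "exp (V x) > 1" using x by simp
      hence "lam * exp (V x) * (exp (V x) - 1) > 0" using lam_pos by simp
      then show "0 < lat_lap V x" using V_sub x gnn[of x] by fastforce
    qed
  qed
  have V0c: "\<forall>x\<in>lat_closure \<Omega>. V x \<le> 0" using V0 V_bdry cl by blast
  have u10: "\<forall>x\<in>\<Omega>. u (Suc 0) x \<le> 0"
  proof (rule comp[OF Omega_fin, of "u (Suc 0)" "\<lambda>_. 0", simplified lap0])
    show "\<forall>x\<in>lat_bdry \<Omega>. u (Suc 0) x \<le> 0" using u_bdry by auto
    show "\<forall>x\<in>\<Omega>. 0 < u (Suc 0) x \<longrightarrow> 0 < lat_lap (u (Suc 0)) x"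
    proof (intro ballI impI)
      fix x assume x: "x \<in> \<Omega>" "0 < u (Suc 0) x"
      have "u 0 x = 0" using u0 x unfolding lat_closure_def by auto
      then have "lat_lap (u (Suc 0)) x - K * u (Suc 0) x = g x" using u_eq x by auto
      then show "0 < lat_lap (u (Suc 0)) x" using gnn[of x] Kp x by (smt (verit) mult_pos_pos)
    qed
  qed
  have Q: "\<forall>x\<in>lat_closure \<Omega>. V x \<le> u (Suc k) x \<and> u (Suc k) x \<le> u k x \<and> u k x \<le> 0" for k
  proof (induction k)
    case 0
    have a: "\<forall>x\<in>lat_closure \<Omega>. u (Suc 0) x \<le> u 0 x \<and> u 0 x \<le> 0"
    proof
      fix x assume x: "x \<in> lat_closure \<Omega>"
      have "u 0 x = 0" using u0 x by simp
      moreover have "u (Suc 0) x \<le> 0" using cl[OF x] u10 u_bdry by auto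
      ultimately show "u (Suc 0) x \<le> u 0 x \<and> u 0 x \<le> 0" by simp
    qed
    have "\<forall>x\<in>\<Omega>. V x \<le> u (Suc 0) x"
    proof (rule step[OF Omega_fin lam_pos K_big, where a=V and al=V and g=g and b="u (Suc 0)" and be="u 0"])
      show "\<forall>x\<in>\<Omega>. lam * exp (V x) * (exp (V x) - 1) + g x - K * V x \<le> lat_lap V x - K * V x"
        using V_sub by auto
      show "\<forall>x\<in>\<Omega>. lat_lap (u (Suc 0)) x - K * u (Suc 0) x = lam * exp (u 0 x) * (exp (u 0 x) - 1) + g x - K * u 0 x"
        using u_eq by auto
      show "\<forall>x\<in>\<Omega>. V x \<le> u 0 x \<and> u 0 x \<le> 0" using V0 u0 unfolding lat_closure_def by auto
      show "\<forall>x\<in>lat_bdry \<Omega>. V x \<le> u (Suc 0) x" using V_bdry u_bdry by auto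
    qed
    note b = this
    show ?case
    proof
      fix x assume x: "x \<in> lat_closure \<Omega>"
      have "V x \<le> u (Suc 0) x" using cl[OF x] b V_bdry u_bdry by auto
      then show "V x \<le> u (Suc 0) x \<and> u (Suc 0) x \<le> u 0 x \<and> u 0 x \<le> 0" using a x by blast
    qed
  next
    case (Suc k)
    have c: "\<forall>x\<in>lat_closure \<Omega>. u (Suc k) x \<le> 0" using Suc.IH by (meson order_trans)
    have "\<forall>x\<in>\<Omega>. u (Suc (Suc k)) x \<le> u (Suc k) x"
    proof (rule step[OF Omega_fin lam_pos K_big, where a="u (Suc (Suc k))" and al="u (Suc k)" and g=g and b="u (Suc k)" and be="u k"])
      show "\<forall>x\<in>\<Omega>. lam * exp (u (Suc k) x) * (exp (u (Suc k) x) - 1) + g x - K * u (Suc k) x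
          \<le> lat_lap (u (Suc (Suc k))) x - K * u (Suc (Suc k)) x" using u_eq by auto
      show "\<forall>x\<in>\<Omega>. lat_lap (u (Suc k)) x - K * u (Suc k) x = lam * exp (u k x) * (exp (u k x) - 1) + g x - K * u k x"
        using u_eq by auto
      show "\<forall>x\<in>\<Omega>. u (Suc k) x \<le> u k x \<and> u k x \<le> 0" using Suc unfolding lat_closure_def by auto
      show "\<forall>x\<in>lat_bdry \<Omega>. u (Suc (Suc k)) x \<le> u (Suc k) x" using u_bdry by auto
    qed
    moreover have "\<forall>x\<in>\<Omega>. V x \<le> u (Suc (Suc k)) x"
    proof (rule step[OF Omega_fin lam_pos K_big, where a=V and al=V and g=g and b="u (Suc (Suc k))" and be="u (Suc k)"])
      show "\<forall>x\<in>\<Omega>. lam * exp (V x) * (exp (V x) - 1) + g x - K * V x \<le> lat_lap V x - K * V x"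
        using V_sub by auto
      show "\<forall>x\<in>\<Omega>. lat_lap (u (Suc (Suc k))) x - K * u (Suc (Suc k)) x = lam * exp (u (Suc k) x) * (exp (u (Suc k) x) - 1) + g x - K * u (Suc k) x"
        using u_eq by auto
      show "\<forall>x\<in>\<Omega>. V x \<le> u (Suc k) x \<and> u (Suc k) x \<le> 0" using Suc c unfolding lat_closure_def by auto
      show "\<forall>x\<in>lat_bdry \<Omega>. V x \<le> u (Suc (Suc k)) x" using V_bdry u_bdry by auto
    qed
    ultimately have d: "\<forall>x\<in>\<Omega>. V x \<le> u (Suc (Suc k)) x \<and> u (Suc (Suc k)) x \<le> u (Suc k) x" by blast
    show ?case
    proof
      fix x assume x: "x \<in> lat_closure \<Omega>"
      have "V x \<le> u (Suc (Suc k)) x \<and> u (Suc (Suc k)) x \<le> u (Suc k) x"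
        using cl[OF x] d V_bdry u_bdry by fastforce
      then show "V x \<le> u (Suc (Suc k)) x \<and> u (Suc (Suc k)) x \<le> u (Suc k) x \<and> u (Suc k) x \<le> 0"
        using c x by blast
    qed
  qed
  show ?thesis
  proof
    fix x assume x: "x \<in> lat_closure \<Omega>"
    have dec: "decseq (\<lambda>k. u k x)" using Q x by (intro decseq_SucI) blast
    have lb: "\<forall>i. V x \<le> u i x"
    proof
      fix i show "V x \<le> u i x"
      proof (cases i)
        case 0 then show ?thesis using V0c u0 x by auto
      next
        case (Suc j) then show ?thesis using Q x by blast
      qed
    qed
    obtain L where L: "(\<lambda>k. u k x) \<longlonglongrightarrow> L" "\<forall>i. L \<le> u i x"
      using decseq_convergent[OF dec lb] by blast
    have cv: "convergent (\<lambda>k. u k x)" using L(1) by (auto simp: convergent_def)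
    have lm: "lim (\<lambda>k. u k x) = L" using L(1) by (rule limI)
    have "V x \<le> L" using L(1) lb by (intro LIMSEQ_le_const) auto
    then show "u 0 x = 0 \<and> (\<forall>k. u (Suc k) x \<le> u k x) \<and> convergent (\<lambda>k. u k x)
         \<and> (\<forall>k. lim (\<lambda>k. u k x) \<le> u k x) \<and> V x \<le> lim (\<lambda>k. u k x)"
      using u0 x Q cv lm L(2) by blast
  qed
qed

end
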